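(* Let $p_1=2,p_2=3,\dots$ denote the primes. For real $\sigma>1$ and real $t$, $$|\zeta(\sigma+it)|^2=\frac{\zeta(4\sigma)}{\zeta(2\sigma)}\prod_{n=1}^{\infty}\left(1-\frac{\cos(t\log p_n)}{\cosh(\sigma\log p_n)}\right)^{-1}.$$ In particular, for every integer $k\ge2$ and real $t$, $$|\zeta(k+it)|=(2\pi)^k\sqrt{\frac{|B_{4k}|\,(2k)!}{|B_{2k}|\,(4k)!}}\;\prod_{n=1}^{\infty}\left(1-\frac{\cos(t\log p_n)}{\cosh(k\log p_n)}\right)^{-1/2}.$$
   Context: $\zeta$ is the Riemann zeta function and $B_j$ denotes the $j$-th Bernoulli number ($B_0=1$, $B_1=-1/2$, $B_2=1/6,\dots$). *)

theory Defs
  imports "HOL-Analysis.Analysis" "HOL-Computational_Algebra.Primes"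
begin

(* Riemann zeta function on the half-plane Re s > 1, given by its Dirichlet series.
   The statement only evaluates zeta at points with real part > 1. *)
definition zeta :: "complex \<Rightarrow> complex" where
  "zeta s = (\<Sum>n. 1 / (of_nat (Suc n)) powr s)"

(* Bernoulli numbers, B_0 = 1, B_1 = -1/2, B_2 = 1/6, ...:
   sum_{k=0}^{n} binom(n+1,k) B_k = 0 for n >= 1 *)
fun bernoulli :: "nat \<Rightarrow> real" where
  "bernoulli n = (if n = 0 then 1
     else - (\<Sum>k<n. real (Suc n choose k) * bernoulli k) / real (Suc n))"

(* nth_prime 0 = 2, nth_prime 1 = 3, ... ; so p_n (paper, 1-indexed) = nth_prime (n-1) *)
definition nth_prime :: "nat \<Rightarrow> nat" where
  "nth_prime n = enumerate {p::nat. prime p} n"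

end

theory Submission
  imports Defs "HOL-Analysis.Analysis"
begin



lemma primes_inf: "infinite {p::nat. prime p}" using primes_infinite by simp

lemma prime_nth_prime: "prime (nth_prime i)"
  unfolding nth_prime_def using enumerate_in_set[OF primes_inf] by simp

lemma strict_mono_nth_prime: "strict_mono nth_prime"
  unfolding nth_prime_def strict_mono_def using enumerate_mono[OF _ primes_inf] by auto

lemma nth_prime_surj: "prime q \<Longrightarrow> \<exists>i. nth_prime i = q"
  unfolding nth_prime_def using enumerate_Ex[OF primes_inf, of q] by auto

lemma nth_prime_ge: "nth_prime i \<ge> i"
  using strict_mono_imp_increasing[OF strict_mono_nth_prime] .

lemma nth_prime_inj: "nth_prime i = nth_prime j \<Longrightarrow> i = j"
  using strict_mono_nth_prime by (metis strict_mono_eq)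

definition ff :: "complex \<Rightarrow> nat \<Rightarrow> complex" where
  "ff s n = 1 / of_nat n powr s"

lemma ff_0 [simp]: "ff s 0 = 0" by (simp add: ff_def)
lemma ff_1 [simp]: "ff s 1 = 1" by (simp add: ff_def)
lemma ff_Suc0 [simp]: "ff s (Suc 0) = 1" by (simp add: ff_def)

lemma ff_mult: "m > 0 \<Longrightarrow> n > 0 \<Longrightarrow> ff s (m * n) = ff s m * ff s n"
  unfolding ff_def by (simp add: powr_times_real)

lemma norm_ff: "norm (ff s n) = real n powr (- Re s)"
proof (cases "n = 0")
  case False
  have "norm (of_nat n powr s) = real n powr Re s"
    by (subst norm_powr_real_powr) auto
  thus ?thesis by (simp add: ff_def norm_divide norm_inverse powr_minus divide_inverse)
qed simp

lemma ff_norm_summable: "Re s > 1 \<Longrightarrow> summable (\<lambda>n. norm (ff s n))"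
  unfolding norm_ff by (subst summable_real_powr_iff) auto

lemma ff_sums: "Re s > 1 \<Longrightarrow> ff s sums zeta s"
proof -
  assume s: "Re s > 1"
  have "summable (ff s)" using ff_norm_summable[OF s] by (rule summable_norm_cancel)
  hence "summable (\<lambda>n. ff s (Suc n))" by (rule summable_Suc_iff[of "ff s", THEN iffD2])
  hence "(\<lambda>n. ff s (Suc n)) sums (\<Sum>n. ff s (Suc n))" by (rule summable_sums)
  also have "(\<Sum>n. ff s (Suc n)) = zeta s" by (simp add: zeta_def ff_def)
  finally have "(\<lambda>n. ff s (Suc n)) sums zeta s" .
  thus ?thesis by (subst (asm) sums_Suc_iff) simp
qed

lemma ff_has_sum: "Re s > 1 \<Longrightarrow> (ff s has_sum zeta s) UNIV"
  by (intro norm_summable_imp_has_sum ff_norm_summable ff_sums)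

definition AA :: "nat \<Rightarrow> nat set" where
  "AA j = {n. n \<ge> 1 \<and> (\<forall>i<j. \<not> nth_prime i dvd n)}"

lemma AA_step: "AA (Suc j) = AA j - (\<lambda>m. nth_prime j * m) ` AA j"
proof safe
  fix n assume "n \<in> AA (Suc j)" thus "n \<in> AA j" by (auto simp: AA_def)
next
  fix m assume "nth_prime j * m \<in> AA (Suc j)"
  thus False by (auto simp: AA_def)
next
  fix n assume n: "n \<in> AA j" "n \<notin> (\<lambda>m. nth_prime j * m) ` AA j"
  show "n \<in> AA (Suc j)"
  proof (rule ccontr)
    assume "n \<notin> AA (Suc j)"
    with n(1) have "nth_prime j dvd n" by (auto simp: AA_def less_Suc_eq)
    then obtain m where m: "n = nth_prime j * m" by (auto elim: dvdE)
    have "m \<in> AA j" using n(1) unfolding m AA_def by (auto intro: dvd_mult)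
    with n(2) m show False by auto
  qed
qed

lemma AA_image_sub: "(\<lambda>m. nth_prime j * m) ` AA j \<subseteq> AA j"
proof safe
  fix m assume m: "m \<in> AA j"
  have pj: "nth_prime j \<ge> 1" using prime_gt_0_nat[OF prime_nth_prime[of j]] by linarith
  show "nth_prime j * m \<in> AA j"
    unfolding AA_def
  proof (safe)
    show "1 \<le> nth_prime j * m" using m pj by (auto simp: AA_def)
  next
    fix i assume i: "i < j" and d: "nth_prime i dvd nth_prime j * m"
    from d have "nth_prime i dvd nth_prime j \<or> nth_prime i dvd m"
      using prime_nth_prime[of i] by (simp add: prime_dvd_mult_iff)
    thus False
    proof
      assume "nth_prime i dvd nth_prime j"
      hence "nth_prime i = nth_prime j"
        using prime_nth_prime[of i] prime_nth_prime[of j] primes_dvd_imp_eq by blast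
      hence "i = j" by (rule nth_prime_inj)
      with i show False by simp
    qed (use m i in \<open>auto simp: AA_def\<close>)
  qed
qed


lemma AA_0: "AA 0 = {1..}" by (auto simp: AA_def)

lemma AA_has_sum:
  assumes s: "Re s > 1"
  shows "(ff s has_sum (zeta s * (\<Prod>i<j. (1 - ff s (nth_prime i))))) (AA j)"
proof (induction j)
  case 0
  have "(ff s has_sum zeta s) UNIV" by (rule ff_has_sum[OF s])
  hence "(ff s has_sum zeta s) {1..}"
    by (rule has_sum_cong_neutral[THEN iffD1, rotated -1]) (auto simp: not_le)
  thus ?case by (simp add: AA_0)
next
  case (Suc j)
  define P where "P = zeta s * (\<Prod>i<j. (1 - ff s (nth_prime i)))"
  define q where "q = nth_prime j"
  have q0: "q > 0" unfolding q_def using prime_gt_0_nat[OF prime_nth_prime[of j]] .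
  have IH: "(ff s has_sum P) (AA j)" using Suc.IH by (simp add: P_def)
  have "((\<lambda>m. ff s q * ff s m) has_sum (ff s q * P)) (AA j)"
    by (rule has_sum_cmult_right[OF IH])
  hence "((ff s \<circ> (\<lambda>m. q * m)) has_sum (ff s q * P)) (AA j)"
  proof (rule has_sum_cong[THEN iffD1, rotated])
    fix m assume "m \<in> AA j"
    hence "m > 0" by (auto simp: AA_def)
    thus "ff s q * ff s m = (ff s \<circ> (\<lambda>m. q * m)) m" using q0 by (simp add: ff_mult)
  qed
  hence img: "(ff s has_sum (ff s q * P)) ((\<lambda>m. q * m) ` AA j)"
    using q0 by (subst has_sum_reindex) (auto simp: inj_on_def)
  have "(ff s has_sum (P - ff s q * P)) (AA j - (\<lambda>m. q * m) ` AA j)"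
    by (rule has_sum_Diff[OF IH img]) (use AA_image_sub[of j] in \<open>simp add: q_def\<close>)
  also have "AA j - (\<lambda>m. q * m) ` AA j = AA (Suc j)" by (simp add: AA_step q_def)
  also have "P - ff s q * P = zeta s * (\<Prod>i<Suc j. (1 - ff s (nth_prime i)))"
    by (simp add: P_def q_def algebra_simps)
  finally show ?case .
qed

lemma AA_tail: "j \<ge> 2 \<Longrightarrow> AA j - {1} \<subseteq> {j..}"
proof
  fix n assume j: "j \<ge> 2" and n: "n \<in> AA j - {1}"
  hence n1: "n \<ge> 2" by (auto simp: AA_def)
  then obtain q where q: "prime q" "q dvd n" using prime_factor_nat[of n] by auto
  obtain i where i: "nth_prime i = q" using nth_prime_surj[OF q(1)] by auto
  have "\<not> i < j" using n q(2) i by (auto simp: AA_def)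
  hence "j \<le> nth_prime j" "nth_prime j \<le> nth_prime i"
    using nth_prime_ge[of j] strict_mono_nth_prime by (auto simp: strict_mono_less_eq not_less)
  moreover have "q \<le> n" using q(2) n1 by (intro dvd_imp_le) auto
  ultimately show "n \<in> {j..}" using i by auto
qed

lemma euler_lim:
  assumes s: "Re s > 1"
  shows "(\<lambda>j. zeta s * (\<Prod>i<j. (1 - ff s (nth_prime i)))) \<longlonglongrightarrow> 1"
proof -
  define S where "S j = zeta s * (\<Prod>i<j. (1 - ff s (nth_prime i)))" for j
  define N where "N = (\<lambda>n. norm (ff s n))"
  define T where "T = (\<Sum>n. N n)"
  have Nsum: "summable N" unfolding N_def by (rule ff_norm_summable[OF s])
  have NT: "N sums T" unfolding T_def using Nsum by (rule summable_sums)
  have Nhas: "(N has_sum T) UNIV"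
    by (rule norm_summable_imp_has_sum) (use Nsum NT in \<open>auto simp: N_def\<close>)
  have fsum: "ff s summable_on UNIV" using ff_has_sum[OF s] by (auto simp: summable_on_def)
  have Nsumon: "N summable_on UNIV" using Nhas by (auto simp: summable_on_def)
  have bound: "norm (S j - 1) \<le> T - (\<Sum>n<j. N n)" if j: "j \<ge> 2" for j
  proof -
    have hj: "(ff s has_sum S j) (AA j)" unfolding S_def by (rule AA_has_sum[OF s])
    have np1: "nth_prime i \<noteq> 1" for i using prime_nth_prime[of i] by auto
    have one: "1 \<in> AA j" using np1 by (auto simp: AA_def)
    have h1: "(ff s has_sum 1) {1}" using has_sum_finite[of "{1::nat}" "ff s"] by simp
    have "(ff s has_sum (S j - 1)) (AA j - {1})"
      by (rule has_sum_Diff[OF hj h1]) (use one in auto)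
    hence eq: "S j - 1 = infsum (ff s) (AA j - {1})" by (simp add: infsumI)
    have absum: "(\<lambda>n. norm (ff s n)) summable_on (AA j - {1})"
      by (rule summable_on_subset_banach[of _ UNIV]) (use Nsumon in \<open>auto simp: N_def\<close>)
    have "norm (S j - 1) \<le> infsum (\<lambda>n. norm (ff s n)) (AA j - {1})"
      unfolding eq by (rule norm_infsum_bound[OF absum])
    also have "\<dots> \<le> infsum N {j..}"
    proof (rule infsum_mono_neutral)
      show "(\<lambda>n. norm (ff s n)) summable_on (AA j - {1})" by (rule absum)
      show "N summable_on {j..}" by (rule summable_on_subset_banach[OF Nsumon]) auto
    qed (use AA_tail[OF j] in \<open>auto simp: N_def\<close>)
    also have "infsum N {j..} = T - (\<Sum>n<j. N n)"
    proof -
      have "(N has_sum (T - (\<Sum>n<j. N n))) (UNIV - {..<j})"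
        by (rule has_sum_Diff[OF Nhas]) auto
      moreover have "UNIV - {..<j} = {j..}" by auto
      ultimately show ?thesis by (simp add: infsumI)
    qed
    finally show ?thesis .
  qed
  have "(\<lambda>j. T - (\<Sum>n<j. N n)) \<longlonglongrightarrow> T - T"
    using NT unfolding sums_def by (intro tendsto_diff tendsto_const)
  hence lim: "(\<lambda>j. T - (\<Sum>n<j. N n)) \<longlonglongrightarrow> 0" by simp
  have ev: "eventually (\<lambda>j. norm (S j - 1) \<le> T - (\<Sum>n<j. N n)) sequentially"
    using bound by (intro eventually_sequentiallyI[of 2]) auto
  have "(\<lambda>j. S j - 1) \<longlonglongrightarrow> 0"
    by (rule Lim_null_comparison[OF ev lim])
  hence "(\<lambda>j. S j - 1 + 1) \<longlonglongrightarrow> 0 + 1" by (intro tendsto_intros)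
  thus ?thesis by (simp add: S_def)
qed



lemma ff_exp: "p > 0 \<Longrightarrow> ff s p = exp (- (s * of_real (ln (real p))))"
  by (simp add: ff_def powr_def exp_minus inverse_eq_divide)

lemma factor_base:
  fixes \<sigma> t x :: real
  defines "u \<equiv> exp (- (\<sigma> * x))"
  shows "1 - cos (t * x) / cosh (\<sigma> * x) = (1 - 2 * u * cos (t * x) + u^2) / (1 + u^2)"
proof -
  have u0: "u > 0" by (simp add: u_def)
  have e: "exp (\<sigma> * x) = 1 / u" by (simp add: u_def exp_minus divide_inverse)
  have c: "cosh (\<sigma> * x) = (1/u + u) / 2" by (simp add: cosh_def e u_def)
  have "1 + u * u > 0" using u0 by (simp add: add_pos_nonneg)
  thus ?thesis using u0 unfolding c by (simp add: field_simps power2_eq_square)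
qed

lemma norm_one_minus_exp:
  fixes \<sigma> t x :: real
  defines "u \<equiv> exp (- (\<sigma> * x))"
  shows "(cmod (1 - exp (- (Complex \<sigma> t * of_real x))))^2 = 1 - 2 * u * cos (t * x) + u^2"
proof -
  have re: "Re (exp (- (Complex \<sigma> t * of_real x))) = u * cos (t * x)"
    by (simp add: Re_exp u_def)
  have im: "Im (exp (- (Complex \<sigma> t * of_real x))) = - (u * sin (t * x))"
    by (simp add: Im_exp u_def)
  have "(cmod (1 - exp (- (Complex \<sigma> t * of_real x))))^2 = (1 - u * cos (t * x))^2 + (u * sin (t * x))^2"
    unfolding cmod_power2 using re im by simp
  also have "\<dots> = 1 - 2 * u * cos (t * x) + u^2 * ((sin (t * x))^2 + (cos (t * x))^2)"
    unfolding power2_eq_square by algebra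
  finally show ?thesis by simp
qed

lemma ff_real: "p > 0 \<Longrightarrow> ff (of_real a) p = of_real (exp (- (a * ln (real p))))"
  by (simp add: ff_exp exp_of_real[symmetric])

lemma factor_complex:
  fixes \<sigma> t :: real and p :: nat
  assumes p: "p \<ge> 2" and \<sigma>: "\<sigma> > 0"
  defines "x \<equiv> ln (real p)"
  defines "s \<equiv> Complex \<sigma> t"
  shows "complex_of_real (inverse (1 - cos (t * x) / cosh (\<sigma> * x))) =
     (1 - ff (of_real (4*\<sigma>)) p) / ((1 - ff (of_real (2*\<sigma>)) p) * ((1 - ff s p) * cnj (1 - ff s p)))"
    and "1 - cos (t * x) / cosh (\<sigma> * x) > 0"
proof -
  define u where "u = exp (- (\<sigma> * x))"
  have x0: "x > 0" using p by (simp add: x_def)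
  have u0: "u > 0" and u1: "u < 1" using x0 \<sigma> by (auto simp: u_def)
  have p0: "p > 0" using p by simp
  have f4: "ff (of_real (4*\<sigma>)) p = of_real (u^4)"
    using ff_real[OF p0, of "4*\<sigma>"] by (simp add: u_def x_def exp_of_nat_mult[symmetric] mult_ac)
  have f2: "ff (of_real (2*\<sigma>)) p = of_real (u^2)"
    using ff_real[OF p0, of "2*\<sigma>"] by (simp add: u_def x_def exp_of_nat_mult[symmetric] mult_ac)
  have fs: "(1 - ff s p) * cnj (1 - ff s p) = of_real (1 - 2 * u * cos (t * x) + u^2)"
  proof -
    have A: "(1 - ff s p) * cnj (1 - ff s p) = of_real ((cmod (1 - ff s p))^2)"
      by (rule complex_norm_square[symmetric])
    have e: "ff s p = exp (- (Complex \<sigma> t * of_real x))" by (simp add: ff_exp[OF p0] s_def x_def)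
    have "(cmod (1 - ff s p))^2 = 1 - 2 * u * cos (t * x) + u^2"
      unfolding e u_def by (rule norm_one_minus_exp)
    with A show ?thesis by simp
  qed
  have base: "1 - cos (t * x) / cosh (\<sigma> * x) = (1 - 2 * u * cos (t * x) + u^2) / (1 + u^2)"
    unfolding u_def by (rule factor_base)
  have pos: "1 - 2 * u * cos (t * x) + u^2 > 0"
  proof -
    have "u * cos (t * x) \<le> u * 1" using u0 by (intro mult_left_mono) auto
    moreover have "0 < (1 - u)^2" using u1 by simp
    hence "2 * u < 1 + u^2" by (simp add: power2_eq_square algebra_simps)
    ultimately show ?thesis by linarith
  qed
  show "1 - cos (t * x) / cosh (\<sigma> * x) > 0" unfolding base using pos by (simp add: add_pos_nonneg)
  have "u^2 < 1" using u0 u1 by (simp add: power_less_one_iff)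
  hence u2: "1 - u^2 \<noteq> 0" by simp
  have R: "(1 - u^4) / ((1 - u^2) * (1 - 2 * u * cos (t * x) + u^2)) =
        inverse ((1 - 2 * u * cos (t * x) + u^2) / (1 + u^2))"
  proof -
    have "1 - u^4 = (1 - u^2) * (1 + u^2)" by (simp add: algebra_simps power2_eq_square power4_eq_xxxx)
    hence "(1 - u^4) / ((1 - u^2) * (1 - 2 * u * cos (t * x) + u^2)) =
           (1 + u^2) / (1 - 2 * u * cos (t * x) + u^2)"
      using u2 by simp
    thus ?thesis by (simp only: inverse_divide)
  qed
  thus "complex_of_real (inverse (1 - cos (t * x) / cosh (\<sigma> * x))) =
     (1 - ff (of_real (4*\<sigma>)) p) / ((1 - ff (of_real (2*\<sigma>)) p) * ((1 - ff s p) * cnj (1 - ff s p)))"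
  proof -
    have "(1 - complex_of_real (u^4)) / ((1 - complex_of_real (u^2)) * complex_of_real (1 - 2 * u * cos (t * x) + u^2))
        = complex_of_real ((1 - u^4) / ((1 - u^2) * (1 - 2 * u * cos (t * x) + u^2)))" by simp
    thus ?thesis unfolding base f4 f2 fs using R by (simp only:)
  qed
qed




declare bernoulli.simps[simp del]

lemma bernoulli_rec:
  assumes "n \<ge> 1"
  shows "(\<Sum>k\<le>n. real (Suc n choose k) * bernoulli k) = 0"
proof -
  have "bernoulli n = - (\<Sum>k<n. real (Suc n choose k) * bernoulli k) / real (Suc n)"
    using assms by (subst bernoulli.simps) simp
  hence "real (Suc n) * bernoulli n = - (\<Sum>k<n. real (Suc n choose k) * bernoulli k)"
    by (simp add: field_simps del: of_nat_Suc)
  moreover have "(\<Sum>k\<le>n. real (Suc n choose k) * bernoulli k) =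
     (\<Sum>k<n. real (Suc n choose k) * bernoulli k) + real (Suc n) * bernoulli n"
    by (simp add: lessThan_Suc_atMost[symmetric] del: of_nat_Suc)
  ultimately show ?thesis by simp
qed

lemma bernoulli_rec':
  "(\<Sum>k\<le>n. bernoulli k / (fact k * fact (Suc n - k))) = (if n = 0 then 1 else 0)"
proof (cases "n = 0")
  case True thus ?thesis by (simp add: bernoulli.simps)
next
  case False
  have "(\<Sum>k\<le>n. bernoulli k / (fact k * fact (Suc n - k))) =
        (\<Sum>k\<le>n. real (Suc n choose k) * bernoulli k) / fact (Suc n)"
    unfolding sum_divide_distrib
  proof (intro sum.cong refl)
    fix k assume "k \<in> {..n}"
    hence "real (Suc n choose k) = fact (Suc n) / (fact k * fact (Suc n - k))"
      by (intro binomial_fact) auto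
    thus "bernoulli k / (fact k * fact (Suc n - k)) = real (Suc n choose k) * bernoulli k / fact (Suc n)"
      by simp
  qed
  also have "\<dots> = 0" using False bernoulli_rec[of n] by simp
  finally show ?thesis using False by simp
qed

definition Bf :: "complex fps" where
  "Bf = Abs_fps (\<lambda>n. of_real (bernoulli n) * (2*\<i>)^n / fact n)"
definition Ef :: "complex fps" where
  "Ef = Abs_fps (\<lambda>n. (2*\<i>)^n / fact (Suc n))"

lemma Bf_Ef: "Bf * Ef = 1"
proof (rule fps_ext)
  fix n
  have "fps_nth (Bf * Ef) n = (\<Sum>k=0..n. of_real (bernoulli k) * (2*\<i>)^k / fact k * ((2*\<i>)^(n-k) / fact (Suc (n-k))))"
    by (simp add: fps_mult_nth Bf_def Ef_def)
  also have "\<dots> = (2*\<i>)^n * of_real (\<Sum>k\<le>n. bernoulli k / (fact k * fact (Suc n - k)))"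
    unfolding of_real_sum sum_distrib_left atMost_atLeast0
    by (intro sum.cong refl) (auto simp: power_add[symmetric] Suc_diff_le field_simps)
  also have "\<dots> = fps_nth 1 n" by (subst bernoulli_rec') auto
  finally show "fps_nth (Bf * Ef) n = fps_nth 1 n" .
qed

lemma Ef_exp: "fps_const (2*\<i>) * fps_X * Ef = fps_exp (2*\<i>) - 1"
proof (rule fps_ext)
  fix n
  show "fps_nth (fps_const (2*\<i>) * fps_X * Ef) n = fps_nth (fps_exp (2*\<i>) - 1) n"
    by (cases n) (simp_all add: Ef_def mult.assoc fps_X_mult_nth algebra_simps)
qed

definition Sf :: "complex fps" where "Sf = fps_shift 1 (fps_sin 1)"

lemma Sf_X: "fps_X * Sf = fps_sin 1"
proof (rule fps_ext)
  fix n show "fps_nth (fps_X * Sf) n = fps_nth (fps_sin 1) n"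
    by (cases n) (simp_all add: Sf_def fps_X_mult_nth fps_sin_def)
qed

lemma Sf_nz: "Sf \<noteq> 0"
proof
  assume "Sf = 0"
  hence "fps_nth Sf 0 = 0" by simp
  thus False by (simp add: Sf_def fps_sin_def)
qed

lemma abstract_alg:
  fixes B X S c s e i :: "'a::idom"
  assumes e: "e = c + i * s" and ii: "i*i = -1" and cs: "(c * c) + (s * s) = 1" and s: "s = X*S"
     and Be: "B*(e*e - 1) = 2*i*X" and nz: "e \<noteq> 0" "X \<noteq> 0" "2*i \<noteq> 0"
  shows "(B + i*X)*S = c"
proof -
  have 1: "e*e - 1 = 2*i * s*e" using e ii cs by algebra
  have "(2*i*X) * (B*S*e) = (2*i*X) * 1" using Be 1 s by algebra
  hence BSe: "B*S*e = 1" using nz by simp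
  have "((B + i*X)*S) * e = c * e" using BSe e ii cs s by algebra
  thus ?thesis using nz by simp
qed

lemma Bf_main: "(Bf + fps_const \<i> * fps_X) * Sf = fps_cos 1"
proof (rule abstract_alg)
  define e where "e = fps_exp (\<i>::complex)"
  show "fps_exp \<i> = fps_cos 1 + fps_const \<i> * fps_sin (1::complex)"
    using fps_exp_ii_sin_cos[of "1::complex"] by simp
  have "fps_const \<i> * fps_const \<i> = fps_const (\<i> * \<i> :: complex)"
    by (rule fps_const_mult)
  also have "\<dots> = fps_const (-1)" by simp
  finally show "fps_const \<i> * fps_const \<i> = (-1 :: complex fps)" by simp
  show "fps_cos 1 * fps_cos 1 + fps_sin 1 * fps_sin 1 = (1::complex fps)"
    using fps_sin_cos_sum_of_squares[of "1::complex"] unfolding power2_eq_square .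
  show "fps_sin 1 = fps_X * Sf" by (simp add: Sf_X)
  have c2: "fps_const (2*\<i>) = 2 * fps_const \<i>"
    by (simp only: fps_const_mult numeral_fps_const)
  have e2: "fps_exp (2*\<i>) = fps_exp \<i> * fps_exp (\<i>::complex)"
    unfolding mult_2 by (rule fps_exp_add_mult)
  have "Bf * (fps_exp (2*\<i>) - 1) = Bf * (fps_const (2*\<i>) * fps_X * Ef)"
    by (simp only: Ef_exp)
  also have "\<dots> = (Bf * Ef) * (fps_const (2*\<i>) * fps_X)"
    by (simp only: ac_simps)
  finally have "Bf * (fps_exp (2*\<i>) - 1) = (Bf * Ef) * (fps_const (2*\<i>) * fps_X)" .
  thus "Bf * (fps_exp \<i> * fps_exp \<i> - 1) = 2 * fps_const \<i> * fps_X"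
    by (simp only: Bf_Ef e2 c2 mult_1_left mult.assoc)
  show "fps_exp \<i> \<noteq> (0::complex fps)"
  proof
    assume "fps_exp \<i> = (0::complex fps)" hence "fps_nth (fps_exp \<i>) 0 = (0::complex)" by simp
    thus False by simp
  qed
  show "fps_X \<noteq> (0::complex fps)" by simp
  show "2 * fps_const \<i> \<noteq> (0::complex fps)"
    unfolding c2[symmetric] by simp
qed



lemma cancel_aux:
  fixes p S C D E :: complex
  assumes "p \<noteq> 0" "S \<noteq> 0" "p*(p*(C*S)) + p*(D*(S*S)) = p*(E*(S*S))"
  shows "p*C + D*S = E*S"
proof -
  have "(p*S)*(p*C + D*S) = (p*S)*(E*S)" using assms(3) by (simp add: algebra_simps)
  thus ?thesis using assms(1,2) by simp
qed

lemma cot_Digamma: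
  fixes z :: complex
  assumes z: "z \<notin> \<int>"
  shows "of_real pi * cot (of_real pi * z) = Digamma (1 - z) - Digamma z"
proof -
  have z1: "z \<notin> \<int>\<^sub>\<le>\<^sub>0" using z nonpos_Ints_subset_Ints by blast
  have z2: "1 - z \<notin> \<int>\<^sub>\<le>\<^sub>0"
  proof
    assume "1 - z \<in> \<int>\<^sub>\<le>\<^sub>0"
    hence "1 - z \<in> \<int>" using nonpos_Ints_subset_Ints by blast
    hence "1 - (1 - z) \<in> \<int>" by (intro Ints_diff) auto
    with z show False by simp
  qed
  have s: "sin (of_real pi * z) \<noteq> 0"
  proof
    assume "sin (of_real pi * z) = 0"
    then obtain n :: int where "of_real pi * z = of_int n * of_real pi"
      by (auto simp: sin_eq_0)
    hence "z = of_int n" by (simp add: field_simps)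
    with z show False by auto
  qed
  define f where "f = (\<lambda>w::complex. Gamma w * Gamma (1 - w))"
  define g where "g = (\<lambda>w::complex. of_real pi / sin (of_real pi * w))"
  have fg: "f = g" by (auto simp: f_def g_def Gamma_reflection_complex)
  have df: "(f has_field_derivative (Gamma z * Digamma z * Gamma (1 - z) -
              Gamma z * (Gamma (1 - z) * Digamma (1 - z)))) (at z)"
    unfolding f_def using z1 z2
    by (auto intro!: derivative_eq_intros)
  have dg: "(g has_field_derivative (- (of_real pi * (cos (of_real pi * z) * of_real pi)) /
              (sin (of_real pi * z))^2)) (at z)"
    unfolding g_def using s
    by (auto intro!: derivative_eq_intros simp: power2_eq_square)
  from df have df': "(g has_field_derivative (Gamma z * Digamma z * Gamma (1 - z) -
              Gamma z * (Gamma (1 - z) * Digamma (1 - z)))) (at z)" by (simp add: fg)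
  have eq: "Gamma z * Gamma (1 - z) * (Digamma z - Digamma (1 - z)) =
        - (of_real pi * (cos (of_real pi * z) * of_real pi)) / (sin (of_real pi * z))^2"
    using DERIV_unique[OF df' dg] by (simp add: algebra_simps)
  have GG: "Gamma z * Gamma (1 - z) = of_real pi / sin (of_real pi * z)"
    by (rule Gamma_reflection_complex)
  show ?thesis
    using eq s unfolding GG cot_def
    apply (simp add: field_simps power2_eq_square)
    apply (rule cancel_aux[of "of_real pi" "sin (z * of_real pi)"])
    apply auto
    done
qed



lemma notint_nz: "(z::complex) \<notin> \<int> \<Longrightarrow> z + of_nat n \<noteq> 0"
proof
  assume "z \<notin> \<int>" "z + of_nat n = 0"
  hence "z = - of_nat n" by (simp add: eq_neg_iff_add_eq_0)
  thus False using \<open>z \<notin> \<int>\<close> by auto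
qed

lemma notint_nz': "(z::complex) \<notin> \<int> \<Longrightarrow> of_nat n - z \<noteq> 0"
  by auto

lemma cot_series:
  fixes z :: complex
  assumes z: "z \<notin> \<int>"
  assumes cotD: "of_real pi * cot (of_real pi * z) = Digamma (1 - z) - Digamma z"
  shows "(\<lambda>n. -2*z / ((of_nat (Suc n))^2 - z^2)) sums (of_real pi * cot (of_real pi * z) - 1/z)"
proof -
  have z0: "z \<noteq> 0" using z by auto
  have z1: "1 - z \<noteq> 0" using z by auto
  have s0: "(\<lambda>k. inverse (of_nat (Suc k)) - inverse (z + of_nat k)) sums (Digamma z + euler_mascheroni)"
    using summable_Digamma[OF z0] by (simp add: Digamma_def summable_sums)
  have s1: "(\<lambda>k. inverse (of_nat (Suc k)) - inverse ((1 - z) + of_nat k)) sums (Digamma (1 - z) + euler_mascheroni)"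
    using summable_Digamma[OF z1] by (simp add: Digamma_def summable_sums)
  have a: "(\<lambda>k. inverse (z + of_nat k) - inverse ((1 - z) + of_nat k)) sums (Digamma (1 - z) - Digamma z)"
    using sums_diff[OF s1 s0] by simp
  have lim: "(\<lambda>k. inverse (- z + of_nat k)) \<longlonglongrightarrow> 0"
    by (intro filterlim_compose[OF tendsto_inverse_0]
              tendsto_add_filterlim_at_infinity[OF tendsto_const] tendsto_of_nat)
  have t: "(\<lambda>k. inverse (- z + of_nat k) - inverse (- z + of_nat (Suc k))) sums (inverse (- z + of_nat 0) - 0)"
    by (rule telescope_sums'[OF lim])
  have c: "(\<lambda>k. inverse (z + of_nat k) - inverse (- z + of_nat k)) sums
            (of_real pi * cot (of_real pi * z) + 1/z)"
  proof -
    have "(\<lambda>k. (inverse (z + of_nat k) - inverse ((1 - z) + of_nat k)) -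
              (inverse (- z + of_nat k) - inverse (- z + of_nat (Suc k)))) sums
          ((Digamma (1 - z) - Digamma z) - (inverse (- z + of_nat 0) - 0))"
      by (rule sums_diff[OF a t])
    thus ?thesis by (subst cotD) (simp add: algebra_simps divide_inverse)
  qed
  have c': "(\<lambda>k. inverse (z + of_nat (Suc k)) - inverse (- z + of_nat (Suc k))) sums
            (of_real pi * cot (of_real pi * z) + 1/z - (inverse z - inverse (- z)))"
    using c by (subst sums_Suc_iff) simp
  have eq: "inverse (z + of_nat (Suc k)) - inverse (- z + of_nat (Suc k)) =
            -2*z / ((of_nat (Suc k))^2 - z^2)" for k
  proof -
    have n1: "z + of_nat (Suc k) \<noteq> 0" by (rule notint_nz[OF z])
    have n2: "- z + of_nat (Suc k) \<noteq> 0" using notint_nz'[OF z, of "Suc k"] by (simp only: uminus_add_conv_diff, simp)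
    have "(of_nat (Suc k))^2 - z^2 = (z + of_nat (Suc k)) * (- z + of_nat (Suc k))"
      by (simp add: power2_eq_square algebra_simps)
    thus ?thesis using n1 n2 by (simp add: field_simps)
  qed
  have val: "of_real pi * cot (of_real pi * z) + 1/z - (inverse z - inverse (- z)) =
        of_real pi * cot (of_real pi * z) - 1/z"
    by (simp add: inverse_eq_divide)
  from c' have "(\<lambda>k. -2*z / ((of_nat (Suc k))^2 - z^2)) sums
            (of_real pi * cot (of_real pi * z) + 1/z - (inverse z - inverse (- z)))"
    by (simp only: eq)
  thus ?thesis by (simp only: val)
qed



lemma dsum_swap:
  fixes g :: "nat \<Rightarrow> nat \<Rightarrow> complex"
  assumes rows: "\<And>n. summable (\<lambda>j. norm (g n j))"
      and tot: "summable (\<lambda>n. \<Sum>j. norm (g n j))"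
      and rowsum: "\<And>n. (\<lambda>j. g n j) sums h n"
      and hs: "h sums S"
      and cols: "\<And>j. (\<lambda>n. g n j) sums c j"
  shows "c sums S"
proof -
  define r where "r n = (\<Sum>j. norm (g n j))" for n
  have r_nonneg: "r n \<ge> 0" for n unfolding r_def by (intro suminf_nonneg rows) auto
  have le: "norm (g n j) \<le> r n" for n j
  proof -
    have "(\<Sum>i\<in>{j}. norm (g n i)) \<le> r n"
      unfolding r_def by (intro sum_le_suminf rows) auto
    thus ?thesis by simp
  qed
  have colsum: "summable (\<lambda>n. norm (g n j))" for j
    by (rule summable_comparison_test[OF _ tot]) (use le in \<open>auto simp: r_def\<close>)
  have rowhas: "((\<lambda>j. norm (g n j)) has_sum r n) UNIV" for n
    unfolding r_def by (intro norm_summable_imp_has_sum) (use rows in \<open>auto intro: summable_sums\<close>)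
  have rsum: "r summable_on UNIV"
    by (rule norm_summable_imp_summable_on) (use tot r_nonneg in \<open>auto simp: r_def\<close>)
  have nsum: "(\<lambda>(n,j). norm (g n j)) summable_on (UNIV \<times> UNIV)"
    using summable_on_SigmaI[where f = "\<lambda>(n,j). norm (g n j)" and A = UNIV and B = "\<lambda>_. UNIV", OF _ rsum]
      rowhas by auto
  have fsum: "(\<lambda>(n,j). g n j) summable_on (UNIV \<times> UNIV)"
    using nsum by (subst summable_on_iff_abs_summable_on_complex) (simp add: case_prod_unfold)
  then obtain T where T: "((\<lambda>(n,j). g n j) has_sum T) (UNIV \<times> UNIV)"
    by (auto simp: summable_on_def)
  have rowh: "((\<lambda>j. g n j) has_sum h n) UNIV" for n
    by (intro norm_summable_imp_has_sum rows rowsum)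
  have colh: "((\<lambda>n. g n j) has_sum c j) UNIV" for j
    by (intro norm_summable_imp_has_sum colsum cols)
  have "(h has_sum T) UNIV"
    using has_sum_Sigma'[where f = "\<lambda>(n,j). g n j" and A = UNIV and B = "\<lambda>_. UNIV", OF T] rowh by auto
  hence "h sums T" by (rule has_sum_imp_sums)
  hence TS: "T = S" using hs sums_unique2 by blast
  have T': "((\<lambda>(j,n). g n j) has_sum T) (UNIV \<times> UNIV)"
    using T by (subst (asm) has_sum_swap) (simp add: case_prod_unfold)
  have "(c has_sum T) UNIV"
    using has_sum_Sigma'[where f = "\<lambda>(j,n). g n j" and A = UNIV and B = "\<lambda>_. UNIV", OF T'] colh by auto
  thus ?thesis using TS by (auto dest: has_sum_imp_sums)
qed


definition zr :: "nat \<Rightarrow> real" where "zr m = (\<Sum>n. 1 / real (Suc n) ^ m)"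

lemma zr_summable: "m \<ge> 2 \<Longrightarrow> summable (\<lambda>n. 1 / real (Suc n) ^ m)"
proof -
  assume "m \<ge> 2"
  hence "summable (\<lambda>n::nat. 1 / real n ^ m)"
    using inverse_power_summable[of m, where 'a=real] by (simp add: inverse_eq_divide)
  thus ?thesis using summable_Suc_iff[of "\<lambda>n::nat. 1 / real n ^ m"] by (simp del: of_nat_Suc)
qed

lemma zr_sums: "m \<ge> 2 \<Longrightarrow> (\<lambda>n. 1 / real (Suc n) ^ m) sums zr m"
  unfolding zr_def by (intro summable_sums zr_summable)

lemma geom_shift:
  fixes w :: "'a::{banach,real_normed_field}"
  assumes "norm w < 1"
  shows "(\<lambda>j. w ^ Suc j) sums (w / (1 - w))"
  using sums_mult[OF geometric_sums[OF assms], of w] by simp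

lemma Z_aux:
  fixes z :: complex
  assumes z0: "z \<noteq> 0" and z1: "norm z < 1"
  assumes cs: "(\<lambda>n. -2*z / ((of_nat (Suc n))^2 - z^2)) sums (of_real pi * cot (of_real pi * z) - 1/z)"
  shows "(\<lambda>j. (z^2)^Suc j * of_real (zr (2 * Suc j))) sums ((1 - of_real pi * z * cot (of_real pi * z)) / 2)"
proof (rule dsum_swap)
  define g where "g n j = (z^2 / of_nat (Suc n)^2) ^ Suc j" for n j
  define q where "q n = norm z ^ 2 / real (Suc n) ^ 2" for n
  have q: "q n < 1" "q n \<ge> 0" for n
  proof -
    have "norm z ^ 2 < 1" using z1 by (simp add: power_less_one_iff)
    also have "1 \<le> real (Suc n) ^ 2" by simp
    finally show "q n < 1" unfolding q_def by (simp del: of_nat_Suc)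
  qed (simp add: q_def)
  have ng: "norm (g n j) = q n ^ Suc j" for n j
  proof -
    have "norm (g n j) = norm (z^2 / of_nat (Suc n)^2) ^ Suc j" by (simp only: g_def norm_power)
    also have "norm (z^2 / of_nat (Suc n)^2) = q n"
      by (simp only: q_def norm_divide norm_power norm_of_nat)
    finally show ?thesis .
  qed
  show "summable (\<lambda>j. norm (g n j))" for n
    unfolding ng using geom_shift[of "q n"] q[of n] by (auto intro: sums_summable)
  have rn: "(\<Sum>j. norm (g n j)) = q n / (1 - q n)" for n
    unfolding ng using geom_shift[of "q n"] q[of n] by (auto simp: sums_iff)
  show "summable (\<lambda>n. \<Sum>j. norm (g n j))"
    unfolding rn
  proof (rule summable_comparison_test)
    show "summable (\<lambda>n. (norm z ^ 2 / (1 - norm z ^ 2)) * (1 / real (Suc n) ^ 2))"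
      by (intro summable_mult zr_summable) auto
    show "\<exists>N. \<forall>n\<ge>N. norm (q n / (1 - q n)) \<le> (norm z ^ 2 / (1 - norm z ^ 2)) * (1 / real (Suc n) ^ 2)"
    proof (intro exI allI impI)
      fix n :: nat
      have a: "norm z ^ 2 < 1" using z1 by (simp add: power_less_one_iff)
      have b: "1 \<le> real (Suc n) ^ 2" by simp
      have "q n / (1 - q n) = norm z ^ 2 / (real (Suc n) ^ 2 - norm z ^ 2)"
        unfolding q_def using b by (simp add: field_simps del: of_nat_Suc)
      also have "\<dots> \<le> norm z ^ 2 / ((1 - norm z ^ 2) * real (Suc n) ^ 2)"
      proof (rule divide_left_mono)
        have c1: "norm z ^ 2 * 1 \<le> norm z ^ 2 * real (Suc n) ^ 2"
          by (rule mult_left_mono[OF b]) auto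
        thus "(1 - norm z ^ 2) * real (Suc n) ^ 2 \<le> real (Suc n) ^ 2 - norm z ^ 2"
          by (simp add: algebra_simps)
        have p1: "0 < (1 - norm z ^ 2) * real (Suc n) ^ 2" using a by (intro mult_pos_pos) auto
        have p2: "0 < real (Suc n) ^ 2 - norm z ^ 2" using a b by linarith
        show "0 < (real (Suc n) ^ 2 - norm z ^ 2) * ((1 - norm z ^ 2) * real (Suc n) ^ 2)"
          using p2 p1 by (rule mult_pos_pos)
      qed simp
      finally show "norm (q n / (1 - q n)) \<le> (norm z ^ 2 / (1 - norm z ^ 2)) * (1 / real (Suc n) ^ 2)"
        using q[of n] by (simp del: of_nat_Suc)
    qed
  qed
  have D: "of_nat (Suc n)^2 - z^2 \<noteq> 0" for n
  proof
    assume "of_nat (Suc n)^2 - z^2 = 0"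
    hence "norm (z^2) = norm (of_nat (Suc n)^2 :: complex)" by simp
    hence "norm z ^ 2 = real (Suc n) ^ 2" by (simp only: norm_power norm_of_nat)
    moreover have "norm z ^ 2 < 1" using z1 by (simp add: power_less_one_iff)
    moreover have "1 \<le> real (Suc n) ^ 2" by simp
    ultimately show False by linarith
  qed
  show "(\<lambda>j. g n j) sums (z^2 / (of_nat (Suc n)^2 - z^2))" for n
  proof -
    have "norm (z^2 / of_nat (Suc n)^2) = q n"
      by (simp only: q_def norm_divide norm_power norm_of_nat)
    hence "(\<lambda>j. g n j) sums ((z^2 / of_nat (Suc n)^2) / (1 - z^2 / of_nat (Suc n)^2))"
      unfolding g_def using q[of n] by (intro geom_shift) auto
    also have "(z^2 / of_nat (Suc n)^2) / (1 - z^2 / of_nat (Suc n)^2) = z^2 / (of_nat (Suc n)^2 - z^2)"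
      using D[of n] by (simp add: field_simps del: of_nat_Suc)
    finally show ?thesis .
  qed
  show "(\<lambda>n. z^2 / (of_nat (Suc n)^2 - z^2)) sums ((1 - of_real pi * z * cot (of_real pi * z)) / 2)"
  proof -
    have "(\<lambda>n. (-z/2) * (-2*z / ((of_nat (Suc n))^2 - z^2))) sums ((-z/2) * (of_real pi * cot (of_real pi * z) - 1/z))"
      by (rule sums_mult[OF cs])
    also have "(\<lambda>n. (-z/2) * (-2*z / ((of_nat (Suc n))^2 - z^2))) = (\<lambda>n. z^2 / (of_nat (Suc n)^2 - z^2))"
      by (simp add: power2_eq_square)
    also have "(-z/2) * (of_real pi * cot (of_real pi * z) - 1/z) = (1 - of_real pi * z * cot (of_real pi * z)) / 2"
      using z0 by (simp add: field_simps)
    finally show ?thesis .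
  qed
  show "(\<lambda>n. g n j) sums ((z^2)^Suc j * of_real (zr (2 * Suc j)))" for j
  proof -
    have "(\<lambda>n. of_real (1 / real (Suc n) ^ (2 * Suc j)) :: complex) sums of_real (zr (2 * Suc j))"
      by (intro sums_of_real zr_sums) auto
    from sums_mult[OF this, of "(z^2)^Suc j"]
    show ?thesis
      by (simp add: g_def power_divide power_mult[symmetric] del: of_nat_Suc power_Suc)
  qed
qed


definition Dz :: "complex fps" where
  "Dz = Abs_fps (\<lambda>n. if n = 0 then 1 else if even n then - 2 * of_real (zr n) / of_real pi ^ n else 0)"

lemma zr_le: "m \<ge> 2 \<Longrightarrow> zr m \<le> zr 2"
  unfolding zr_def
  by (intro suminf_le zr_summable) (auto simp: divide_simps power_increasing simp del: of_nat_Suc)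

lemma zr_nonneg: "m \<ge> 2 \<Longrightarrow> zr m \<ge> 0"
  unfolding zr_def by (intro suminf_nonneg zr_summable) auto

lemma Dz_radius: "fps_conv_radius Dz > 0"
proof -
  have "summable (\<lambda>n. fps_nth Dz n * 1 ^ n)"
  proof (rule summable_comparison_test)
    show "summable (\<lambda>n. 2 * zr 2 * (1/pi) ^ n)"
      by (intro summable_mult summable_geometric) (use pi_gt3 in auto)
    show "\<exists>N. \<forall>n\<ge>N. norm (fps_nth Dz n * 1 ^ n) \<le> 2 * zr 2 * (1/pi) ^ n"
    proof (intro exI[of _ 1] allI impI)
      fix n :: nat assume n: "n \<ge> 1"
      show "norm (fps_nth Dz n * 1 ^ n) \<le> 2 * zr 2 * (1/pi) ^ n"
      proof (cases "even n")
        case True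
        with n have "n \<ge> 2" by presburger
        have "zr n \<le> zr 2" using \<open>n \<ge> 2\<close> by (rule zr_le)
        moreover have "zr n \<ge> 0" using \<open>n \<ge> 2\<close> by (rule zr_nonneg)
        ultimately have "2 * \<bar>zr n\<bar> / pi ^ n \<le> 2 * zr 2 / pi ^ n"
          by (intro divide_right_mono) auto
        thus ?thesis using True n
          by (simp add: Dz_def norm_divide norm_mult norm_power power_one_over)
      qed (use n zr_nonneg[of 2] in \<open>auto simp: Dz_def\<close>)
    qed
  qed
  hence "fps_conv_radius Dz \<ge> norm (1::complex)"
    unfolding fps_conv_radius_def by (rule conv_radius_geI)
  moreover have "(0::ereal) < ereal (norm (1::complex))" by simp
  ultimately show ?thesis by (meson less_le_trans)
qed


lemma Dz_sums:
  fixes w :: complex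
  assumes w0: "w \<noteq> 0" and w1: "norm w < 1"
  shows "(\<lambda>n. fps_nth Dz n * w ^ n) sums (w * cot w)"
proof -
  define z where "z = w / of_real pi"
  have pz: "of_real pi * z = w" by (simp add: z_def)
  have z0: "z \<noteq> 0" using w0 by (simp add: z_def)
  have z1: "norm z < 1"
  proof -
    have "norm z = norm w / pi" by (simp add: z_def norm_divide)
    also have "\<dots> < 1" using w1 pi_gt3 by (simp add: field_simps)
    finally show ?thesis .
  qed
  have zI: "z \<notin> \<int>"
  proof
    assume "z \<in> \<int>"
    then obtain m :: int where m: "z = of_int m" by (auto elim: Ints_cases)
    hence "\<bar>real_of_int m\<bar> < 1" using z1 by (simp add: norm_of_int)
    hence "m = 0" by linarith
    with m z0 show False by simp
  qed
  have V: "(\<lambda>j. (z^2)^Suc j * of_real (zr (2 * Suc j))) sums ((1 - w * cot w) / 2)"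
    using Z_aux[OF z0 z1 cot_series[OF zI cot_Digamma[OF zI]]] pz by (simp add: mult.assoc)
  define f where "f n = fps_nth Dz n * w ^ n" for n
  have f2: "f (2 * Suc j) = -2 * ((z^2)^Suc j * of_real (zr (2 * Suc j)))" for j
    by (simp add: f_def Dz_def z_def power_divide power_mult[symmetric] field_simps del: power_Suc)
  have "(\<lambda>j. f (2 * Suc j)) sums (-2 * ((1 - w * cot w) / 2))"
    unfolding f2 by (rule sums_mult[OF V])
  hence "(\<lambda>j. f (2 * j)) sums (-2 * ((1 - w * cot w) / 2) + f (2 * 0))"
    by (subst (asm) sums_Suc_iff) simp
  also have "-2 * ((1 - w * cot w) / 2) + f (2 * 0) = w * cot w"
    by (simp add: f_def Dz_def field_simps)
  finally have "(\<lambda>j. f (2 * j)) sums (w * cot w)" .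
  hence "f sums (w * cot w)"
    by (subst (asm) sums_mono_reindex) (auto simp: strict_mono_def f_def Dz_def elim!: oddE)
  thus ?thesis unfolding f_def[abs_def] .
qed


lemma sin_nz_small:
  fixes w :: complex
  assumes "w \<noteq> 0" "norm w < 1"
  shows "sin w \<noteq> 0"
proof
  assume "sin w = 0"
  then obtain n :: int where n: "w = of_real (of_int n * pi)" by (auto simp: sin_eq_0)
  hence "\<bar>of_int n * pi\<bar> < 1" using assms(2) by (simp only: norm_of_real)
  hence "\<bar>of_int n\<bar> * pi < 1" by (simp add: abs_mult)
  hence "\<bar>of_int n :: real\<bar> < 1" using pi_gt3
    by (smt (verit, ccfv_SIG) mult_le_cancel_right1)
  hence "n = 0" by linarith
  with n assms(1) show False by simp
qed

lemma Dz_sin: "Dz * fps_sin 1 = fps_X * fps_cos 1"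
proof (rule eval_fps_eqD)
  have R: "fps_conv_radius Dz > 0" by (rule Dz_radius)
  show "fps_conv_radius (Dz * fps_sin 1) > 0"
    using R fps_conv_radius_mult[of Dz "fps_sin 1"] by (auto intro: less_le_trans)
  show "fps_conv_radius (fps_X * fps_cos (1::complex)) > 0"
    using fps_conv_radius_mult[of fps_X "fps_cos (1::complex)"] by (auto intro: less_le_trans)
  have ev1: "eventually (\<lambda>w::complex. w \<in> eball 0 (fps_conv_radius Dz)) (nhds 0)"
    using R by (intro eventually_nhds_in_open) (auto simp: zero_ereal_def)
  have ev2: "eventually (\<lambda>w::complex. w \<in> ball 0 1) (nhds 0)"
    by (intro eventually_nhds_in_open) auto
  show "eventually (\<lambda>w. eval_fps (Dz * fps_sin 1) w = eval_fps (fps_X * fps_cos 1) w) (nhds 0)"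
    using ev1 ev2
  proof eventually_elim
    case (elim w)
    have w1: "norm w < 1" using elim(2) by simp
    have wR: "ereal (norm w) < fps_conv_radius Dz" using elim(1) by simp
    have "eval_fps (Dz * fps_sin 1) w = eval_fps Dz w * sin w"
      using wR by (subst eval_fps_mult) auto
    also have "\<dots> = w * cos w"
    proof (cases "w = 0")
      case True thus ?thesis by simp
    next
      case False
      have "eval_fps Dz w = w * cot w"
        using sums_eval_fps[OF wR] Dz_sums[OF False w1] sums_unique2 by blast
      thus ?thesis using sin_nz_small[OF False w1] by (simp add: cot_def)
    qed
    also have "\<dots> = eval_fps (fps_X * fps_cos 1) w"
      by (subst eval_fps_mult) auto
    finally show ?case .
  qed
qed

lemma Dz_eq: "Dz = Bf + fps_const \<i> * fps_X"
proof -
  have "fps_X * (Dz * Sf) = fps_X * ((Bf + fps_const \<i> * fps_X) * Sf)"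
    using Dz_sin unfolding Bf_main Sf_X[symmetric] by (simp add: ac_simps)
  hence "Dz * Sf = (Bf + fps_const \<i> * fps_X) * Sf" by simp
  thus ?thesis using Sf_nz by simp
qed

lemma zeta_even:
  assumes k: "k \<ge> 1"
  shows "zr (2*k) = \<bar>bernoulli (2*k)\<bar> * (2*pi)^(2*k) / (2 * fact (2*k))"
proof -
  have "fps_nth Dz (2*k) = fps_nth (Bf + fps_const \<i> * fps_X) (2*k)" by (simp add: Dz_eq)
  hence "- 2 * of_real (zr (2*k)) / of_real pi ^ (2*k) =
          of_real (bernoulli (2*k)) * (2*\<i>)^(2*k) / fact (2*k)"
    using k by (simp add: Dz_def Bf_def)
  also have "(2*\<i>)^(2*k) = (of_real ((-4)^k) :: complex)"
    by (simp add: power_mult power_mult_distrib)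
  finally have "complex_of_real (- 2 * zr (2*k) / pi ^ (2*k)) =
       complex_of_real (bernoulli (2*k) * (-4)^k / fact (2*k))" by simp
  hence eq: "- 2 * zr (2*k) / pi ^ (2*k) = bernoulli (2*k) * (-4)^k / fact (2*k)"
    by (simp only: of_real_eq_iff)
  hence eq2: "zr (2*k) = - bernoulli (2*k) * (-4)^k * pi^(2*k) / (2 * fact (2*k))"
    by (simp add: field_simps)
  have nn: "zr (2*k) \<ge> 0" using k by (intro zr_nonneg) auto
  have e4: "(2*pi)^(2*k) = 4^k * pi^(2*k)"
    by (simp add: power_mult power_mult_distrib)
  have "\<bar>zr (2*k)\<bar> = \<bar>bernoulli (2*k)\<bar> * (2*pi)^(2*k) / (2 * fact (2*k))"
    unfolding eq2 e4 by (simp add: abs_mult power_abs)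
  thus ?thesis using nn by simp
qed



lemma zeta_nz_lim:
  assumes s: "Re s > 1"
  shows "zeta s \<noteq> 0" and "(\<lambda>j. \<Prod>i<j. (1 - ff s (nth_prime i))) \<longlonglongrightarrow> 1 / zeta s"
proof -
  have L: "(\<lambda>j. zeta s * (\<Prod>i<j. (1 - ff s (nth_prime i)))) \<longlonglongrightarrow> 1" by (rule euler_lim[OF s])
  show nz: "zeta s \<noteq> 0"
  proof
    assume "zeta s = 0"
    with L have "(\<lambda>j. 0::complex) \<longlonglongrightarrow> 1" by simp
    moreover have "(\<lambda>j. 0::complex) \<longlonglongrightarrow> 0" by simp
    ultimately show False using LIMSEQ_unique by fastforce
  qed
  have "(\<lambda>j. (zeta s * (\<Prod>i<j. (1 - ff s (nth_prime i)))) / zeta s) \<longlonglongrightarrow> 1 / zeta s"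
    by (intro tendsto_divide L tendsto_const nz)
  thus "(\<lambda>j. \<Prod>i<j. (1 - ff s (nth_prime i))) \<longlonglongrightarrow> 1 / zeta s" using nz by simp
qed

lemma part1:
  fixes \<sigma> t :: real
  assumes \<sigma>: "\<sigma> > 1"
  defines "F \<equiv> \<lambda>i. inverse (1 - cos (t * ln (real (nth_prime i))) / cosh (\<sigma> * ln (real (nth_prime i))))"
  shows "\<exists>L. (\<lambda>n. \<Prod>i\<le>n. F i) \<longlonglongrightarrow> L \<and> L > 0 \<and> (\<forall>i. F i > 0) \<and>
           complex_of_real L = zeta (of_real (2*\<sigma>)) * of_real ((cmod (zeta (Complex \<sigma> t)))^2) / zeta (of_real (4*\<sigma>)) \<and>
           zeta (of_real (2*\<sigma>)) \<noteq> 0 \<and> zeta (of_real (4*\<sigma>)) \<noteq> 0"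
proof -
  define s where "s = Complex \<sigma> t"
  define a2 where "a2 = complex_of_real (2*\<sigma>)"
  define a4 where "a4 = complex_of_real (4*\<sigma>)"
  define P where "P a j = (\<Prod>i<j. (1 - ff a (nth_prime i)))" for a j
  have rs: "Re s > 1" "Re a2 > 1" "Re a4 > 1" using \<sigma> by (auto simp: s_def a2_def a4_def)
  have nz: "zeta s \<noteq> 0" "zeta a2 \<noteq> 0" "zeta a4 \<noteq> 0" using zeta_nz_lim(1) rs by auto
  have lim: "P s \<longlonglongrightarrow> 1 / zeta s" "P a2 \<longlonglongrightarrow> 1 / zeta a2" "P a4 \<longlonglongrightarrow> 1 / zeta a4"
    unfolding P_def[abs_def] using zeta_nz_lim(2) rs by auto
  define Lc where "Lc = (1 / zeta a4) / ((1 / zeta a2) * ((1 / zeta s) * cnj (1 / zeta s)))"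
  have Qlim: "(\<lambda>j. P a4 j / (P a2 j * (P s j * cnj (P s j)))) \<longlonglongrightarrow> Lc"
    unfolding Lc_def using nz by (intro tendsto_intros lim) auto
  have pos: "1 - cos (t * ln (real (nth_prime i))) / cosh (\<sigma> * ln (real (nth_prime i))) > 0" for i
    using factor_complex(2)[of "nth_prime i" \<sigma> t] prime_ge_2_nat[OF prime_nth_prime[of i]] \<sigma> by simp
  have Fpos: "F i > 0" for i unfolding F_def using pos[of i] by simp
  have Q: "complex_of_real (\<Prod>i<j. F i) = P a4 j / (P a2 j * (P s j * cnj (P s j)))" for j
  proof -
    have "complex_of_real (\<Prod>i<j. F i) = (\<Prod>i<j. complex_of_real (F i))" by simp
    also have "\<dots> = (\<Prod>i<j. (1 - ff a4 (nth_prime i)) / ((1 - ff a2 (nth_prime i)) *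
                      ((1 - ff s (nth_prime i)) * cnj (1 - ff s (nth_prime i)))))"
      unfolding F_def a4_def a2_def s_def
      by (intro prod.cong refl factor_complex(1)) (use prime_ge_2_nat[OF prime_nth_prime] \<sigma> in auto)
    also have "\<dots> = P a4 j / (P a2 j * (P s j * cnj (P s j)))"
      by (simp add: P_def prod_dividef prod.distrib cnj_prod)
    finally show ?thesis .
  qed
  have Rlim: "(\<lambda>j. complex_of_real (\<Prod>i<j. F i)) \<longlonglongrightarrow> Lc" unfolding Q by (rule Qlim)
  have ImLc: "Im Lc = 0"
  proof -
    have "(\<lambda>j. Im (complex_of_real (\<Prod>i<j. F i))) \<longlonglongrightarrow> Im Lc" by (intro tendsto_Im Rlim)
    hence "(\<lambda>j. 0) \<longlonglongrightarrow> Im Lc" by (simp only: Im_complex_of_real)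
    thus ?thesis using LIMSEQ_unique tendsto_const by blast
  qed
  define L where "L = Re Lc"
  have LcL: "Lc = complex_of_real L" using ImLc by (simp add: L_def complex_eq_iff)
  have rlim: "(\<lambda>j. \<Prod>i<j. F i) \<longlonglongrightarrow> L"
    using Rlim unfolding LcL by (simp only: tendsto_of_real_iff)
  have Lc_eq: "Lc = zeta a2 * of_real ((cmod (zeta s))^2) / zeta a4"
    unfolding Lc_def complex_norm_square using nz by (simp add: field_simps)
  have "Lc \<noteq> 0" unfolding Lc_eq using nz by simp
  hence Lnz: "L \<noteq> 0" using LcL by auto
  have "L \<ge> 0"
    by (rule LIMSEQ_le_const[OF rlim]) (use Fpos in \<open>auto intro: prod_nonneg less_imp_le\<close>)
  with Lnz have Lpos: "L > 0" by simp
  have "(\<lambda>n. \<Prod>i<Suc n. F i) \<longlonglongrightarrow> L" using rlim by (rule LIMSEQ_Suc)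
  hence "(\<lambda>n. \<Prod>i\<le>n. F i) \<longlonglongrightarrow> L" by (simp add: lessThan_Suc_atMost)
  thus ?thesis using Lpos Fpos nz LcL Lc_eq by (auto simp: a2_def a4_def s_def)
qed


lemma zeta_nat: "m \<ge> 2 \<Longrightarrow> zeta (complex_of_real (real m)) = complex_of_real (zr m)"
proof -
  assume m: "m \<ge> 2"
  have "(\<lambda>n. complex_of_real (1 / real (Suc n) ^ m)) sums complex_of_real (zr m)"
    by (intro sums_of_real zr_sums m)
  moreover have "(\<lambda>n. complex_of_real (1 / real (Suc n) ^ m)) = (\<lambda>n. 1 / (of_nat (Suc n)) powr (complex_of_real (real m)))"
  proof
    fix n
    have "(of_nat (Suc n) :: complex) powr (complex_of_real (real m)) = of_nat (Suc n) ^ m"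
      by (subst of_real_of_nat_eq) (rule powr_nat', rule disjI1, rule of_nat_neq_0)
    thus "complex_of_real (1 / real (Suc n) ^ m) = 1 / (of_nat (Suc n)) powr (complex_of_real (real m))"
      by simp
  qed
  ultimately have "(\<lambda>n. 1 / (of_nat (Suc n)) powr (complex_of_real (real m))) sums complex_of_real (zr m)" by simp
  thus ?thesis by (simp add: zeta_def sums_iff)
qed

lemma zr_pos: "m \<ge> 2 \<Longrightarrow> zr m > 0"
proof -
  assume m: "m \<ge> 2"
  have "0 < (\<Sum>n. 1 / real (Suc n) ^ m)"
    by (rule suminf_pos[OF zr_summable[OF m]]) (simp del: of_nat_Suc)
  thus ?thesis by (simp add: zr_def del: of_nat_Suc)
qed

lemma prod_sqrt:
  fixes f :: "nat \<Rightarrow> real" and n :: nat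
  shows "(\<Prod>i\<le>n. sqrt (f i)) = sqrt (\<Prod>i\<le>n. f i)"
  by (induction n) (simp_all add: real_sqrt_mult)

theorem mainTheorem6:
  shows "(\<forall>(\<sigma>::real) (t::real). \<sigma> > 1 \<longrightarrow>
            convergent_prod (\<lambda>n. inverse (1 - cos (t * ln (real (nth_prime n)))
                                          / cosh (\<sigma> * ln (real (nth_prime n))))) \<and>
            complex_of_real ((cmod (zeta (Complex \<sigma> t)))\<^sup>2) =
              zeta (complex_of_real (4 * \<sigma>)) / zeta (complex_of_real (2 * \<sigma>)) *
              complex_of_real (\<Prod>n. inverse (1 - cos (t * ln (real (nth_prime n)))
                                          / cosh (\<sigma> * ln (real (nth_prime n))))))
       \<and> (\<forall>(k::nat) (t::real). k \<ge> 2 \<longrightarrow>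
            convergent_prod (\<lambda>n. (1 - cos (t * ln (real (nth_prime n)))
                                          / cosh (real k * ln (real (nth_prime n)))) powr (-1/2)) \<and>
            cmod (zeta (Complex (real k) t)) =
              (2 * pi) ^ k * sqrt (\<bar>bernoulli (4 * k)\<bar> * fact (2 * k)
                                   / (\<bar>bernoulli (2 * k)\<bar> * fact (4 * k))) *
              (\<Prod>n. (1 - cos (t * ln (real (nth_prime n)))
                          / cosh (real k * ln (real (nth_prime n)))) powr (-1/2)))"
proof (intro conjI allI impI)
  show "convergent_prod (\<lambda>n. inverse (1 - cos (t * ln (real (nth_prime n))) / cosh (\<sigma> * ln (real (nth_prime n)))))"
   and "complex_of_real ((cmod (zeta (Complex \<sigma> t)))\<^sup>2) =
              zeta (complex_of_real (4 * \<sigma>)) / zeta (complex_of_real (2 * \<sigma>)) *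
              complex_of_real (\<Prod>n. inverse (1 - cos (t * ln (real (nth_prime n)))
                                          / cosh (\<sigma> * ln (real (nth_prime n)))))"
    if \<sigma>: "\<sigma> > 1" for \<sigma> t :: real
  proof -
    define F where "F = (\<lambda>i. inverse (1 - cos (t * ln (real (nth_prime i))) / cosh (\<sigma> * ln (real (nth_prime i)))))"
    obtain L where L: "(\<lambda>n. \<Prod>i\<le>n. F i) \<longlonglongrightarrow> L" "L > 0" "\<forall>i. F i > 0"
      "complex_of_real L = zeta (of_real (2*\<sigma>)) * of_real ((cmod (zeta (Complex \<sigma> t)))^2) / zeta (of_real (4*\<sigma>))"
      "zeta (of_real (2*\<sigma>)) \<noteq> 0" "zeta (of_real (4*\<sigma>)) \<noteq> 0"
      using part1[OF \<sigma>, of t] unfolding F_def by blast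
    have Fnz: "F i \<noteq> 0" for i using L(3) by (metis less_irrefl)
    have cp: "convergent_prod F"
      using convergent_prod_iff_nz_lim[of F] Fnz L(1,2) by auto
    have "prodinf F = L" using convergent_prod_LIMSEQ[OF cp] L(1) LIMSEQ_unique by blast
    show "convergent_prod F" unfolding F_def[symmetric] by (rule cp)
    show "complex_of_real ((cmod (zeta (Complex \<sigma> t)))\<^sup>2) =
              zeta (complex_of_real (4 * \<sigma>)) / zeta (complex_of_real (2 * \<sigma>)) * complex_of_real (prodinf F)"
      using L(4,5,6) \<open>prodinf F = L\<close> by (simp add: field_simps)
  qed
next
  fix k :: nat and t :: real
  assume k: "k \<ge> 2"
  define \<sigma> where "\<sigma> = real k"
  have \<sigma>: "\<sigma> > 1" using k by (simp add: \<sigma>_def)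
  define F where "F = (\<lambda>i. inverse (1 - cos (t * ln (real (nth_prime i))) / cosh (\<sigma> * ln (real (nth_prime i)))))"
  define G where "G = (\<lambda>i. (1 - cos (t * ln (real (nth_prime i))) / cosh (\<sigma> * ln (real (nth_prime i)))) powr (-1/2))"
  obtain L where L: "(\<lambda>n. \<Prod>i\<le>n. F i) \<longlonglongrightarrow> L" "L > 0" "\<forall>i. F i > 0"
    "complex_of_real L = zeta (of_real (2*\<sigma>)) * of_real ((cmod (zeta (Complex \<sigma> t)))^2) / zeta (of_real (4*\<sigma>))"
    using part1[OF \<sigma>, of t] unfolding F_def by blast
  have GF: "G i = sqrt (F i)" for i
  proof -
    have b: "1 - cos (t * ln (real (nth_prime i))) / cosh (\<sigma> * ln (real (nth_prime i))) > 0"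
      using L(3) by (auto simp: F_def)
    define b where "b = 1 - cos (t * ln (real (nth_prime i))) / cosh (\<sigma> * ln (real (nth_prime i)))"
    have "b powr (-1/2) = inverse (b powr (1/2))" by (subst powr_minus[symmetric]) simp
    also have "b powr (1/2) = sqrt b" using b by (simp add: b_def powr_half_sqrt)
    also have "inverse (sqrt b) = sqrt (inverse b)" by (simp add: real_sqrt_inverse)
    finally show ?thesis unfolding G_def F_def b_def .
  qed
  have Glim: "(\<lambda>n. \<Prod>i\<le>n. G i) \<longlonglongrightarrow> sqrt L"
    unfolding GF prod_sqrt by (intro tendsto_intros L(1))
  have Gpos: "G i > 0" for i using L(3) by (simp add: GF)
  have Gnz: "G i \<noteq> 0" for i using Gpos[of i] by simp
  have cp: "convergent_prod G"
    using convergent_prod_iff_nz_lim[of G] Gnz Glim L(2) by auto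
  have pG: "prodinf G = sqrt L" using convergent_prod_LIMSEQ[OF cp] Glim LIMSEQ_unique by blast
  show "convergent_prod (\<lambda>n. (1 - cos (t * ln (real (nth_prime n))) / cosh (real k * ln (real (nth_prime n)))) powr (-1/2))"
    using cp by (simp add: G_def \<sigma>_def)
  have z2: "zeta (of_real (2*\<sigma>)) = of_real (zr (2*k))"
    using zeta_nat[of "2*k"] k by (simp add: \<sigma>_def)
  have z4: "zeta (of_real (4*\<sigma>)) = of_real (zr (4*k))"
    using zeta_nat[of "4*k"] k by (simp add: \<sigma>_def)
  have p2: "zr (2*k) > 0" and p4: "zr (4*k) > 0" using k by (auto intro!: zr_pos)
  define Z where "Z = cmod (zeta (Complex \<sigma> t))"
  have "complex_of_real L = complex_of_real (zr (2*k) * Z^2 / zr (4*k))"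
    using L(4) unfolding z2 z4 Z_def by simp
  hence LZ: "L = zr (2*k) * Z^2 / zr (4*k)" by (simp only: of_real_eq_iff)
  have e2: "zr (2*k) = \<bar>bernoulli (2*k)\<bar> * (2*pi)^(2*k) / (2 * fact (2*k))"
    using k by (intro zeta_even) auto
  have e4: "zr (4*k) = \<bar>bernoulli (4*k)\<bar> * (2*pi)^(4*k) / (2 * fact (4*k))"
    using zeta_even[of "2*k"] k by (simp add: mult.assoc)
  have B2: "\<bar>bernoulli (2*k)\<bar> > 0" using p2 e2 by (auto simp: zero_less_divide_iff zero_less_mult_iff)
  define R where "R = \<bar>bernoulli (4 * k)\<bar> * fact (2 * k) / (\<bar>bernoulli (2 * k)\<bar> * fact (4 * k))"
  have ratio: "zr (4*k) / zr (2*k) = (2*pi)^(2*k) * R"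
  proof -
    have kk: "4*k = 2*k + 2*k" by simp
    have "(2*pi)^(4*k) = (2*pi)^(2*k) * (2*pi)^(2*k)" unfolding kk by (rule power_add)
    thus ?thesis unfolding e2 e4 R_def using B2 by (simp add: field_simps)
  qed
  have "Z^2 = L * (zr (4*k) / zr (2*k))"
    using LZ p2 p4 by (simp add: field_simps)
  hence Z2: "Z^2 = (2*pi)^(2*k) * R * L" unfolding ratio by (simp only: ac_simps)
  have R0: "R \<ge> 0" unfolding R_def by simp
  have "Z = sqrt (Z^2)" by (simp add: Z_def)
  also have "\<dots> = sqrt (((2*pi)^k)^2) * sqrt R * sqrt L"
  proof -
    have "(2*pi)^(2*k) = ((2*pi)^k)^2" by (simp only: power_mult[symmetric] mult.commute)
    thus ?thesis unfolding Z2 by (simp only: real_sqrt_mult)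
  qed
  also have "sqrt (((2*pi)^k)^2) = (2*pi)^k" by simp
  finally show "cmod (zeta (Complex (real k) t)) =
              (2 * pi) ^ k * sqrt (\<bar>bernoulli (4 * k)\<bar> * fact (2 * k)
                                   / (\<bar>bernoulli (2 * k)\<bar> * fact (4 * k))) *
              (\<Prod>n. (1 - cos (t * ln (real (nth_prime n)))
                          / cosh (real k * ln (real (nth_prime n)))) powr (-1/2))"
    using pG unfolding Z_def R_def G_def \<sigma>_def by simp
qed


end
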